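(* Assume (A1), (A2), (A3) and that $u_0:\mathbb{T}^d\to\mathbb{R}$ is Lipschitz continuous. Let $u\in C(\overline{Q_T})$ be a viscosity solution of $\partial_t^\alpha u+H(t,x,u,Du)=0$ in $Q_T$, $u(0,\cdot)=u_0$. Then there exists a constant $M>0$ depending only on $H$, $u_0$, $\alpha$ and $T$ such that $|u(t,x)-u_0(x)|\le Mt^\alpha$ for all $(t,x)\in\overline{Q_T}$.
   Context: Fix $d\ge1$, $T>0$, $\alpha\in(0,1)$. $\mathbb{T}^d=\mathbb{R}^d/\mathbb{Z}^d$; functions on $[0,T]\times\mathbb{T}^d$ are identified with functions on $[0,T]\times\mathbb{R}^d$ $\mathbb{Z}^d$-periodic in $x$. $Q_T=(0,T]\times\mathbb{T}^d$, $\overline{Q_T}=[0,T]\times\mathbb{T}^d$; $D$ spatial gradient; $\partial_t^\alpha$ Caputo's derivative $(\partial_t^\alpha f)(t)=\frac{1}{\Gamma(1-\alpha)}\int_0^t f'(s)(t-s)^{-\alpha}ds$. $H:\overline{Q_T}\times\mathbb{R}\times\mathbb{R}^d\to\mathbb{R}$. Assumptions: (A1) $H$ continuous. (A2) there is a modulus $\omega$ with $|H(t,x,r,p)-H(t,y,r,p)|\le\omega(|x-y|(1+|p|))$ for all $t\in[0,T]$, $x,y\in\mathbb{R}^d$, $r\in\mathbb{R}$, $p\in\mathbb{R}^d$. (A3) $r\mapsto H(t,x,r,p)$ nondecreasing. $\mathcal{C}^1([a,b]\times O)=\{\phi\in C^1((a,b]\times O)\cap C([a,b]\times O):\partial_t\phi(\cdot,x)\in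 L^1(a,b)\ \forall x\in O\}$. For measurable $f(t,x)$, $t\in(0,T]$, $r\in[0,t]$: $J_r[f](t,x)=\frac{\alpha}{\Gamma(1-\alpha)}\int_0^r (f(t,x)-f(t-\tau,x))\tau^{-\alpha-1}d\tau$, $K_r[f](t,x)=\frac{f(t,x)-f(0,x)}{t^\alpha\Gamma(1-\alpha)}+\frac{\alpha}{\Gamma(1-\alpha)}\int_r^t (f(t,x)-f(t-\tau,x))\tau^{-\alpha-1}d\tau$ (improper at lower limit $0$). Viscosity sub/supersolution: $u\in USC(\overline{Q_T})$ (resp. $LSC$) such that for all $a<b$ in $[0,T]$, every open ball $B\subset\mathbb{R}^d$, every $\phi\in\mathcal{C}^1([0,T]\times\mathbb{R}^d)$ and every $(\hat t,\hat x)\in(a,b]\times B$ where $u-\phi$ attains its maximum (resp. minimum) over $[a,b]\times\overline B$: $J_{\hat t-a}[\phi](\hat t,\hat x)+K_{\hat t-a}[u](\hat t,\hat x)+H(\hat t,\hat x,u(\hat t,\hat x),D\phi(\hat t,\hat x))\le0$ (resp. $\ge0$). A viscosity solution of the initial value problem is $u\in C(\overline{Q_T})$ that is both, with $u(0,\cdot)=u_0$. *)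

theory Defs
  imports "HOL-Analysis.Analysis"
begin

text \<open>Points of the d-dimensional space are vectors of type real^'n (d = CARD('n)).
Functions on [0,T] x T^d are functions on [0,T] x R^d that are Z^d-periodic in x.\<close>

definition int_vec :: "real^'n \<Rightarrow> bool" where
  "int_vec z \<longleftrightarrow> (\<forall>i. z $ i \<in> \<int>)"

definition periodic_x :: "(real \<Rightarrow> real^'n \<Rightarrow> real) \<Rightarrow> bool" where
  "periodic_x f \<longleftrightarrow> (\<forall>t x z. int_vec z \<longrightarrow> f t (x + z) = f t x)"

definition upper_semicont_on :: "('a::metric_space) set \<Rightarrow> ('a \<Rightarrow> real) \<Rightarrow> bool" where
  "upper_semicont_on S f \<longleftrightarrow>
     (\<forall>p\<in>S. \<forall>e>0. \<exists>\<delta>>0. \<forall>q\<in>S. dist q p < \<delta> \<longrightarrow> f q < f p + e)"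

definition lower_semicont_on :: "('a::metric_space) set \<Rightarrow> ('a \<Rightarrow> real) \<Rightarrow> bool" where
  "lower_semicont_on S f \<longleftrightarrow>
     (\<forall>p\<in>S. \<forall>e>0. \<exists>\<delta>>0. \<forall>q\<in>S. dist q p < \<delta> \<longrightarrow> f p - e < f q)"

definition is_modulus :: "(real \<Rightarrow> real) \<Rightarrow> bool" where
  "is_modulus \<omega> \<longleftrightarrow> \<omega> 0 = 0 \<and> (\<forall>s\<ge>0. \<omega> s \<ge> 0) \<and> mono_on {0..} \<omega> \<and>
     (\<omega> \<longlongrightarrow> 0) (at_right 0)"

definition test_fun :: "real \<Rightarrow> (real \<Rightarrow> real^'n \<Rightarrow> real) \<Rightarrow> (real \<Rightarrow> real^'n \<Rightarrow> real)
    \<Rightarrow> (real \<Rightarrow> real^'n \<Rightarrow> real^'n) \<Rightarrow> bool" where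
  "test_fun T \<phi> \<phi>t D\<phi> \<longleftrightarrow>
     continuous_on ({0..T} \<times> UNIV) (\<lambda>(t,x). \<phi> t x) \<and>
     (\<forall>t\<in>{0<..T}. \<forall>x. ((\<lambda>(s,y). \<phi> s y) has_derivative (\<lambda>(h,k). h * \<phi>t t x + D\<phi> t x \<bullet> k))
         (at (t,x) within ({0<..T} \<times> UNIV))) \<and>
     continuous_on ({0<..T} \<times> UNIV) (\<lambda>(t,x). \<phi>t t x) \<and>
     continuous_on ({0<..T} \<times> UNIV) (\<lambda>(t,x). D\<phi> t x) \<and>
     (\<forall>x. (\<lambda>t. \<phi>t t x) absolutely_integrable_on {0..T})"

definition Jop :: "real \<Rightarrow> real \<Rightarrow> (real \<Rightarrow> real^'n \<Rightarrow> real) \<Rightarrow> real \<Rightarrow> real^'n \<Rightarrow> real" where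
  "Jop \<alpha> r f t x = \<alpha> / Gamma (1 - \<alpha>) *
     integral {0..r} (\<lambda>\<tau>. (f t x - f (t - \<tau>) x) * \<tau> powr (- \<alpha> - 1))"

definition Kop :: "real \<Rightarrow> real \<Rightarrow> (real \<Rightarrow> real^'n \<Rightarrow> real) \<Rightarrow> real \<Rightarrow> real^'n \<Rightarrow> real" where
  "Kop \<alpha> r f t x = (f t x - f 0 x) / (t powr \<alpha> * Gamma (1 - \<alpha>)) +
     \<alpha> / Gamma (1 - \<alpha>) * integral {r..t} (\<lambda>\<tau>. (f t x - f (t - \<tau>) x) * \<tau> powr (- \<alpha> - 1))"

type_synonym 'n hamiltonian = "real \<Rightarrow> real^'n \<Rightarrow> real \<Rightarrow> real^'n \<Rightarrow> real"

definition visc_subsol :: "real \<Rightarrow> real \<Rightarrow> 'n hamiltonian \<Rightarrow> (real \<Rightarrow> real^'n \<Rightarrow> real) \<Rightarrow> bool" where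
  "visc_subsol \<alpha> T H u \<longleftrightarrow>
     periodic_x u \<and> upper_semicont_on ({0..T} \<times> UNIV) (\<lambda>(t,x). u t x) \<and>
     (\<forall>a b c \<rho> \<phi> \<phi>t D\<phi> th xh.
        0 \<le> a \<and> a < b \<and> b \<le> T \<and> test_fun T \<phi> \<phi>t D\<phi> \<and>
        th \<in> {a<..b} \<and> xh \<in> ball c \<rho> \<and>
        (\<forall>s\<in>{a..b}. \<forall>y\<in>closure (ball c \<rho>). u s y - \<phi> s y \<le> u th xh - \<phi> th xh)
        \<longrightarrow> Jop \<alpha> (th - a) \<phi> th xh + Kop \<alpha> (th - a) u th xh + H th xh (u th xh) (D\<phi> th xh) \<le> 0)"

definition visc_supersol :: "real \<Rightarrow> real \<Rightarrow> 'n hamiltonian \<Rightarrow> (real \<Rightarrow> real^'n \<Rightarrow> real) \<Rightarrow> bool" where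
  "visc_supersol \<alpha> T H u \<longleftrightarrow>
     periodic_x u \<and> lower_semicont_on ({0..T} \<times> UNIV) (\<lambda>(t,x). u t x) \<and>
     (\<forall>a b c \<rho> \<phi> \<phi>t D\<phi> th xh.
        0 \<le> a \<and> a < b \<and> b \<le> T \<and> test_fun T \<phi> \<phi>t D\<phi> \<and>
        th \<in> {a<..b} \<and> xh \<in> ball c \<rho> \<and>
        (\<forall>s\<in>{a..b}. \<forall>y\<in>closure (ball c \<rho>). u s y - \<phi> s y \<ge> u th xh - \<phi> th xh)
        \<longrightarrow> Jop \<alpha> (th - a) \<phi> th xh + Kop \<alpha> (th - a) u th xh + H th xh (u th xh) (D\<phi> th xh) \<ge> 0)"

definition visc_sol :: "real \<Rightarrow> real \<Rightarrow> 'n hamiltonian \<Rightarrow> (real^'n \<Rightarrow> real) \<Rightarrow> (real \<Rightarrow> real^'n \<Rightarrow> real) \<Rightarrow> bool" where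
  "visc_sol \<alpha> T H u0 u \<longleftrightarrow>
     continuous_on ({0..T} \<times> UNIV) (\<lambda>(t,x). u t x) \<and>
     visc_subsol \<alpha> T H u \<and> visc_supersol \<alpha> T H u \<and> (\<forall>x. u 0 x = u0 x)"

end

theory Submission
  imports Defs
begin

definition phif :: "real \<Rightarrow> real \<Rightarrow> real \<Rightarrow> real^'n \<Rightarrow> real \<Rightarrow> real \<Rightarrow> real \<Rightarrow> real^'n \<Rightarrow> real" where
  "phif \<alpha> L M x0 c0 \<eta> t x = c0 + L * sqrt ((x - x0) \<bullet> (x - x0) + \<eta>\<^sup>2) + M * t powr \<alpha>"
definition phitf :: "real \<Rightarrow> real \<Rightarrow> real \<Rightarrow> real^'n \<Rightarrow> real" where
  "phitf \<alpha> M t x = M * (\<alpha> * t powr (\<alpha> - 1))"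
definition Dphif :: "real \<Rightarrow> real^'n \<Rightarrow> real \<Rightarrow> real \<Rightarrow> real^'n \<Rightarrow> real^'n" where
  "Dphif L x0 \<eta> t x = (L / sqrt ((x - x0) \<bullet> (x - x0) + \<eta>\<^sup>2)) *\<^sub>R (x - x0)"

lemma sq_pos: "(\<eta>::real) > 0 \<Longrightarrow> 0 < (x - x0) \<bullet> (x - x0) + \<eta>\<^sup>2"
  by (simp add: add_nonneg_pos)

lemma sq_ne: "(\<eta>::real) > 0 \<Longrightarrow> (x - x0) \<bullet> (x - x0) + \<eta>\<^sup>2 \<noteq> 0"
  using sq_pos[of \<eta> x x0] by linarith

lemma test_fun_phi:
  fixes x0 :: "real^'n"
  assumes a: "0 < \<alpha>" "\<alpha> < 1" and T: "T > 0" and eta: "\<eta> > 0" and M: "M \<ge> 0"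
  shows "test_fun T (phif \<alpha> L M x0 c0 \<eta>) (phitf \<alpha> M) (Dphif L x0 \<eta>)"
  unfolding test_fun_def
proof (intro conjI ballI allI)
  show "continuous_on ({0..T} \<times> UNIV) (\<lambda>(t,x). phif \<alpha> L M x0 c0 \<eta> t x)"
    unfolding phif_def split_beta
    using a by (auto intro!: continuous_intros continuous_on_powr')
  show "continuous_on ({0<..T} \<times> UNIV) (\<lambda>(t,x). phitf \<alpha> M t x)"
    unfolding phitf_def split_beta
    by (auto intro!: continuous_intros continuous_on_powr')
  show "continuous_on ({0<..T} \<times> UNIV) (\<lambda>(t,x). Dphif L x0 \<eta> t x)"
    unfolding Dphif_def split_beta
    using eta by (auto intro!: continuous_intros simp: sq_ne)
  fix x :: "real^'n"
  have "(\<lambda>t. t powr (\<alpha> - 1)) integrable_on {0..T}"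
    using has_integral_powr_from_0[of "\<alpha> - 1" T] a T by (auto simp: integrable_on_def)
  then have "(\<lambda>t. t powr (\<alpha> - 1)) absolutely_integrable_on {0..T}"
    by (rule nonnegative_absolutely_integrable_1) auto
  then have "(\<lambda>t. (M * \<alpha>) *\<^sub>R t powr (\<alpha> - 1)) absolutely_integrable_on {0..T}"
    by (rule absolutely_integrable_scaleR_left)
  then show "(\<lambda>t. phitf \<alpha> M t x) absolutely_integrable_on {0..T}"
    unfolding phitf_def by (simp add: mult.assoc)
next
  fix t x assume t: "t \<in> {0<..T}"
  have "((\<lambda>z. c0 + L * sqrt ((snd z - x0) \<bullet> (snd z - x0) + \<eta>\<^sup>2) + M * fst z powr \<alpha>) has_derivative
     (\<lambda>(h,k). h * phitf \<alpha> M t x + Dphif L x0 \<eta> t x \<bullet> k)) (at (t,x) within ({0<..T} \<times> UNIV))"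
    using t eta
    apply (auto intro!: derivative_eq_intros simp: add_nonneg_pos phitf_def Dphif_def split_beta)
    apply (auto simp: fun_eq_iff inner_commute powr_diff field_simps)
    done
  then show "((\<lambda>(s,y). phif \<alpha> L M x0 c0 \<eta> s y) has_derivative
     (\<lambda>(h,k). h * phitf \<alpha> M t x + Dphif L x0 \<eta> t x \<bullet> k)) (at (t,x) within ({0<..T} \<times> UNIV))"
    unfolding phif_def split_beta .
qed

lemma norm_le_sq: "norm (a::real^'n) \<le> sqrt (a \<bullet> a + \<eta>\<^sup>2)"
proof -
  have "norm a = sqrt (a \<bullet> a)" by (rule norm_eq_sqrt_inner)
  also have "\<dots> \<le> sqrt (a \<bullet> a + \<eta>\<^sup>2)" by (rule real_sqrt_le_mono) simp
  finally show ?thesis .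
qed

lemma norm_Dphif: "L \<ge> 0 \<Longrightarrow> \<eta> > 0 \<Longrightarrow> norm (Dphif L x0 \<eta> t x) \<le> L"
proof -
  assume L: "L \<ge> 0" and e: "\<eta> > 0"
  have sp: "sqrt ((x - x0) \<bullet> (x - x0) + \<eta>\<^sup>2) > 0" using sq_pos[OF e] by simp
  have "norm (Dphif L x0 \<eta> t x) = L / sqrt ((x - x0) \<bullet> (x - x0) + \<eta>\<^sup>2) * norm (x - x0)"
    unfolding Dphif_def using L sp by simp
  also have "\<dots> \<le> L / sqrt ((x - x0) \<bullet> (x - x0) + \<eta>\<^sup>2) * sqrt ((x - x0) \<bullet> (x - x0) + \<eta>\<^sup>2)"
    by (rule mult_left_mono[OF norm_le_sq]) (use L sp in simp)
  also have "\<dots> = L" using sp by simp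
  finally show ?thesis .
qed

lemma integral_nonneg_any:
  fixes f :: "real \<Rightarrow> real"
  assumes "\<And>x. x \<in> S \<Longrightarrow> 0 \<le> f x" shows "0 \<le> integral S f"
proof (cases "f integrable_on S")
  case True then show ?thesis using integral_nonneg assms by blast
qed (simp add: not_integrable_integral)

lemma integral_nonpos_any:
  fixes f :: "real \<Rightarrow> real"
  assumes "\<And>x. x \<in> S \<Longrightarrow> f x \<le> 0" shows "integral S f \<le> 0"
proof -
  have "0 \<le> integral S (\<lambda>x. - f x)" by (rule integral_nonneg_any) (use assms in force)
  moreover have "integral S (\<lambda>x. - f x) = - integral S f" by (rule integral_neg)
  ultimately show ?thesis by simp
qed

lemma Kop_refl: "Kop \<alpha> t u t x = (u t x - u 0 x) / (t powr \<alpha> * Gamma (1 - \<alpha>))"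
  unfolding Kop_def by simp

lemma Jop_phi_nonneg:
  assumes a: "0 < \<alpha>" "\<alpha> < 1" and M: "M \<ge> 0" and th: "th > 0"
  shows "0 \<le> Jop \<alpha> th (phif \<alpha> L M x0 c0 \<eta>) th xh"
proof -
  have "0 \<le> integral {0..th} (\<lambda>\<tau>. (phif \<alpha> L M x0 c0 \<eta> th xh - phif \<alpha> L M x0 c0 \<eta> (th - \<tau>) xh) * \<tau> powr (- \<alpha> - 1))"
  proof (rule integral_nonneg_any)
    fix \<tau> assume "\<tau> \<in> {0..th}"
    then have "(th - \<tau>) powr \<alpha> \<le> th powr \<alpha>" using a by (intro powr_mono2) auto
    then have "0 \<le> M * (th powr \<alpha> - (th - \<tau>) powr \<alpha>)" using M by simp
    moreover have "phif \<alpha> L M x0 c0 \<eta> th xh - phif \<alpha> L M x0 c0 \<eta> (th - \<tau>) xh = M * (th powr \<alpha> - (th - \<tau>) powr \<alpha>)"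
      unfolding phif_def by (simp add: algebra_simps)
    ultimately show "0 \<le> (phif \<alpha> L M x0 c0 \<eta> th xh - phif \<alpha> L M x0 c0 \<eta> (th - \<tau>) xh) * \<tau> powr (- \<alpha> - 1)"
      by simp
  qed
  moreover have "0 \<le> \<alpha> / Gamma (1 - \<alpha>)" using a by simp
  ultimately show ?thesis unfolding Jop_def by (simp only: mult_nonneg_nonneg)
qed

lemma Jop_negphi_nonpos:
  assumes a: "0 < \<alpha>" "\<alpha> < 1" and M: "M \<ge> 0" and th: "th > 0"
  shows "Jop \<alpha> th (\<lambda>t x. - phif \<alpha> L M x0 c0 \<eta> t x) th xh \<le> 0"
proof -
  have "integral {0..th} (\<lambda>\<tau>. (- phif \<alpha> L M x0 c0 \<eta> th xh - - phif \<alpha> L M x0 c0 \<eta> (th - \<tau>) xh) * \<tau> powr (- \<alpha> - 1)) \<le> 0"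
  proof (rule integral_nonpos_any)
    fix \<tau> assume "\<tau> \<in> {0..th}"
    then have "(th - \<tau>) powr \<alpha> \<le> th powr \<alpha>" using a by (intro powr_mono2) auto
    then have "0 \<le> M * (th powr \<alpha> - (th - \<tau>) powr \<alpha>)" using M by simp
    moreover have "- phif \<alpha> L M x0 c0 \<eta> th xh - - phif \<alpha> L M x0 c0 \<eta> (th - \<tau>) xh = - (M * (th powr \<alpha> - (th - \<tau>) powr \<alpha>))"
      unfolding phif_def by (simp add: algebra_simps)
    ultimately show "(- phif \<alpha> L M x0 c0 \<eta> th xh - - phif \<alpha> L M x0 c0 \<eta> (th - \<tau>) xh) * \<tau> powr (- \<alpha> - 1) \<le> 0"
      by (simp add: mult_nonpos_nonneg)
  qed
  moreover have "0 \<le> \<alpha> / Gamma (1 - \<alpha>)" using a by simp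
  ultimately show ?thesis unfolding Jop_def by (simp only: mult_nonneg_nonpos)
qed

lemma test_fun_neg:
  assumes "test_fun T \<phi> \<phi>t D\<phi>"
  shows "test_fun T (\<lambda>t x. - \<phi> t x) (\<lambda>t x. - \<phi>t t x) (\<lambda>t x. - D\<phi> t x)"
  using assms unfolding test_fun_def
proof (intro conjI ballI allI; (elim conjE)?)
  assume c1: "continuous_on ({0..T} \<times> UNIV) (\<lambda>(t, x). \<phi> t x)"
    and d: "\<forall>t\<in>{0<..T}. \<forall>x. ((\<lambda>(s, y). \<phi> s y) has_derivative (\<lambda>(h, k). h * \<phi>t t x + D\<phi> t x \<bullet> k))
          (at (t, x) within {0<..T} \<times> UNIV)"
    and c2: "continuous_on ({0<..T} \<times> UNIV) (\<lambda>(t, x). \<phi>t t x)"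
    and c3: "continuous_on ({0<..T} \<times> UNIV) (\<lambda>(t, x). D\<phi> t x)"
    and i: "\<forall>x. (\<lambda>t. \<phi>t t x) absolutely_integrable_on {0..T}"
  show "continuous_on ({0..T} \<times> UNIV) (\<lambda>(t, x). - \<phi> t x)"
    using continuous_on_minus[OF c1] by (simp add: split_beta)
  show "continuous_on ({0<..T} \<times> UNIV) (\<lambda>(t, x). - \<phi>t t x)"
    using continuous_on_minus[OF c2] by (simp add: split_beta)
  show "continuous_on ({0<..T} \<times> UNIV) (\<lambda>(t, x). - D\<phi> t x)"
    using continuous_on_minus[OF c3] by (simp add: split_beta)
  fix x
  show "(\<lambda>t. - \<phi>t t x) absolutely_integrable_on {0..T}"
    using absolutely_integrable_scaleR_left[OF i[rule_format, of x], of "-1"] by simp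
next
  fix t x
  assume d: "\<forall>t\<in>{0<..T}. \<forall>x. ((\<lambda>(s, y). \<phi> s y) has_derivative (\<lambda>(h, k). h * \<phi>t t x + D\<phi> t x \<bullet> k))
          (at (t, x) within {0<..T} \<times> UNIV)" and t: "t \<in> {0<..T}"
  have "((\<lambda>z. - (\<lambda>(s, y). \<phi> s y) z) has_derivative (\<lambda>z. - (\<lambda>(h, k). h * \<phi>t t x + D\<phi> t x \<bullet> k) z))
          (at (t, x) within {0<..T} \<times> UNIV)"
    by (rule has_derivative_minus) (use d t in blast)
  moreover have "(\<lambda>(s, y). - \<phi> s y) = (\<lambda>z. - (\<lambda>(s, y). \<phi> s y) z)" by auto
  moreover have "(\<lambda>(h, k). h * - \<phi>t t x + - D\<phi> t x \<bullet> k) = (\<lambda>z. - (\<lambda>(h, k). h * \<phi>t t x + D\<phi> t x \<bullet> k) z)"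
    by (auto simp: fun_eq_iff)
  ultimately show "((\<lambda>(s, y). - \<phi> s y) has_derivative (\<lambda>(h, k). h * - \<phi>t t x + - D\<phi> t x \<bullet> k))
          (at (t, x) within {0<..T} \<times> UNIV)"
    by simp
qed


lemma core:
  fixes v :: "real \<Rightarrow> real^'n \<Rightarrow> real" and v0 :: "real^'n \<Rightarrow> real" and G :: "'n hamiltonian"
  assumes a: "0 < \<alpha>" "\<alpha> < 1" and T: "T > 0" and L: "L > 0" and C: "C \<ge> 0"
    and cont: "continuous_on ({0..T} \<times> UNIV) (\<lambda>(t,x). v t x)"
    and bnd: "\<forall>t\<in>{0..T}. \<forall>x. \<bar>v t x\<bar> \<le> B"
    and init: "\<forall>x. v 0 x = v0 x"
    and lip: "\<forall>x y. \<bar>v0 x - v0 y\<bar> \<le> L * norm (x - y)"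
    and m0: "\<forall>x. m0 \<le> v0 x"
    and Gb: "\<forall>t\<in>{0..T}. \<forall>x r p. m0 \<le> r \<longrightarrow> norm p \<le> L \<longrightarrow> - C \<le> G t x r p"
    and Mdef: "M = C * Gamma (1 - \<alpha>) + 1"
    and hyp: "\<And>x0 c0 \<eta> R th xh. \<eta> > 0 \<Longrightarrow> R > 0 \<Longrightarrow> th \<in> {0<..T} \<Longrightarrow> xh \<in> ball x0 R \<Longrightarrow>
       (\<forall>s\<in>{0..T}. \<forall>y\<in>cball x0 R. v s y - phif \<alpha> L M x0 c0 \<eta> s y \<le> v th xh - phif \<alpha> L M x0 c0 \<eta> th xh) \<Longrightarrow>
       (v th xh - v 0 xh) / (th powr \<alpha> * Gamma (1 - \<alpha>)) + G th xh (v th xh) (Dphif L x0 \<eta> th xh) \<le> 0"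
  shows "\<forall>t\<in>{0..T}. \<forall>x. v t x - v0 x \<le> M * t powr \<alpha>"
proof (intro ballI allI, rule ccontr)
  fix t0 x0 assume t0: "t0 \<in> {0..T}" and nv: "\<not> v t0 x0 - v0 x0 \<le> M * t0 powr \<alpha>"
  define \<delta> where "\<delta> = v t0 x0 - v0 x0 - M * t0 powr \<alpha>"
  have dpos: "\<delta> > 0" using nv unfolding \<delta>_def by simp
  have Gpos: "Gamma (1 - \<alpha>) > 0" using a by simp
  have Mpos: "M > 0" using Mdef C Gpos by (simp add: add_nonneg_pos)
  define \<eta> where "\<eta> = \<delta> / (2 * L)"
  have epos: "\<eta> > 0" using dpos L unfolding \<eta>_def by simp
  have Le: "L * \<eta> = \<delta> / 2" using L unfolding \<eta>_def by simp
  define c0 where "c0 = v0 x0"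
  define \<phi> where "\<phi> = phif \<alpha> L M x0 c0 \<eta>"
  define \<Psi> where "\<Psi> = (\<lambda>z. v (fst z) (snd z) - \<phi> (fst z) (snd z))"
  define R where "R = (\<bar>B\<bar> + \<bar>c0\<bar> + 1) / L"
  have Rpos: "R > 0" using L unfolding R_def by (simp add: add_nonneg_pos)
  have LR: "L * R = \<bar>B\<bar> + \<bar>c0\<bar> + 1" using L unfolding R_def by simp
  define K where "K = {0..T} \<times> cball x0 R"
  have tf: "test_fun T \<phi> (phitf \<alpha> M) (Dphif L x0 \<eta>)"
    unfolding \<phi>_def by (rule test_fun_phi[OF a T epos]) (use Mpos in simp)
  have cphi: "continuous_on ({0..T} \<times> UNIV) (\<lambda>(t,x). \<phi> t x)"
    using tf unfolding test_fun_def by blast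
  have "continuous_on K \<Psi>"
  proof -
    have "continuous_on K (\<lambda>z. (\<lambda>(t,x). v t x) z - (\<lambda>(t,x). \<phi> t x) z)"
      by (intro continuous_on_diff continuous_on_subset[OF cont] continuous_on_subset[OF cphi])
        (auto simp: K_def)
    then show ?thesis unfolding \<Psi>_def by (simp add: split_beta)
  qed
  moreover have "compact K" unfolding K_def by (intro compact_Times compact_Icc compact_cball)
  moreover have t0K: "(t0, x0) \<in> K" using t0 Rpos unfolding K_def by simp
  ultimately obtain z where zK: "z \<in> K" and zmax: "\<forall>y\<in>K. \<Psi> y \<le> \<Psi> z"
    using continuous_attains_sup[of K \<Psi>] by blast
  obtain th xh where zdef: "z = (th, xh)" by (cases z)
  have th: "th \<in> {0..T}" and xhc: "xh \<in> cball x0 R" using zK zdef K_def by auto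
  have phi_eq: "\<phi> t x = c0 + L * sqrt ((x - x0) \<bullet> (x - x0) + \<eta>\<^sup>2) + M * t powr \<alpha>" for t x
    unfolding \<phi>_def phif_def by simp
  have sq_ge: "norm (x - x0) \<le> sqrt ((x - x0) \<bullet> (x - x0) + \<eta>\<^sup>2)" for x
    by (rule norm_le_sq)
  have "\<Psi> (t0, x0) = \<delta> / 2"
    using epos Le unfolding \<Psi>_def phi_eq \<delta>_def c0_def by simp
  then have Pz: "\<Psi> (th, xh) \<ge> \<delta> / 2" using zmax t0K zdef by auto
  have ub: "\<Psi> (t, x) \<le> B - c0 - L * norm (x - x0)" if "t \<in> {0..T}" for t x
  proof -
    have "v t x \<le> B" using bnd that abs_le_D1 by blast
    moreover have "L * norm (x - x0) \<le> L * sqrt ((x - x0) \<bullet> (x - x0) + \<eta>\<^sup>2)"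
      using L sq_ge by (simp add: mult_left_mono)
    moreover have "0 \<le> M * t powr \<alpha>" using Mpos by simp
    ultimately show ?thesis unfolding \<Psi>_def phi_eq by simp
  qed
  have "norm (xh - x0) < R"
  proof (rule ccontr)
    assume "\<not> norm (xh - x0) < R"
    then have "L * R \<le> L * norm (xh - x0)" using L by (simp add: mult_left_mono)
    then have "\<Psi> (th, xh) < 0" using ub[OF th, of xh] LR by linarith
    then show False using Pz dpos by linarith
  qed
  then have xhb: "xh \<in> ball x0 R" by (simp add: dist_norm norm_minus_commute)
  have thpos: "th > 0"
  proof (rule ccontr)
    assume "\<not> th > 0"
    then have th0: "th = 0" using th by simp
    have "\<Psi> (th, xh) = v0 xh - v0 x0 - L * sqrt ((xh - x0) \<bullet> (xh - x0) + \<eta>\<^sup>2)"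
      unfolding \<Psi>_def phi_eq th0 c0_def using init by simp
    also have "\<dots> \<le> L * norm (xh - x0) - L * sqrt ((xh - x0) \<bullet> (xh - x0) + \<eta>\<^sup>2)"
      using lip[rule_format, of xh x0] by simp
    also have "\<dots> \<le> 0" using L sq_ge[of xh] by (simp add: mult_left_mono)
    finally show False using Pz dpos by linarith
  qed
  have maxc: "\<forall>s\<in>{0..T}. \<forall>y\<in>cball x0 R. v s y - phif \<alpha> L M x0 c0 \<eta> s y \<le> v th xh - phif \<alpha> L M x0 c0 \<eta> th xh"
    using zmax zdef unfolding K_def \<Psi>_def \<phi>_def by auto
  have ineq: "(v th xh - v 0 xh) / (th powr \<alpha> * Gamma (1 - \<alpha>)) + G th xh (v th xh) (Dphif L x0 \<eta> th xh) \<le> 0"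
    by (rule hyp[OF epos Rpos _ xhb maxc]) (use th thpos in simp)
  have "v th xh \<ge> c0"
  proof -
    have "0 \<le> L * sqrt ((xh - x0) \<bullet> (xh - x0) + \<eta>\<^sup>2)" using L by simp
    moreover have "0 \<le> M * th powr \<alpha>" using Mpos by simp
    ultimately show ?thesis using Pz dpos unfolding \<Psi>_def phi_eq by simp
  qed
  then have "m0 \<le> v th xh" using m0 unfolding c0_def by (meson order_trans)
  moreover have "norm (Dphif L x0 \<eta> th xh) \<le> L" using L epos by (simp add: norm_Dphif)
  ultimately have "- C \<le> G th xh (v th xh) (Dphif L x0 \<eta> th xh)" using Gb th by blast
  then have "(v th xh - v0 xh) / (th powr \<alpha> * Gamma (1 - \<alpha>)) \<le> C" using ineq init by simp
  moreover have pp: "th powr \<alpha> * Gamma (1 - \<alpha>) > 0" using thpos Gpos by simp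
  ultimately have up: "v th xh - v0 xh \<le> C * Gamma (1 - \<alpha>) * th powr \<alpha>"
    by (simp add: divide_le_eq mult_ac)
  have "v th xh - v0 xh \<ge> v th xh - c0 - L * norm (xh - x0)"
    using lip[rule_format, of xh x0] unfolding c0_def by simp
  moreover have "L * norm (xh - x0) \<le> L * sqrt ((xh - x0) \<bullet> (xh - x0) + \<eta>\<^sup>2)"
    using L sq_ge by (simp add: mult_left_mono)
  ultimately have "v th xh - v0 xh \<ge> \<Psi> (th, xh) + M * th powr \<alpha>"
    unfolding \<Psi>_def phi_eq by simp
  then have "\<delta> / 2 + M * th powr \<alpha> \<le> C * Gamma (1 - \<alpha>) * th powr \<alpha>" using Pz up by linarith
  then have "\<delta> / 2 + th powr \<alpha> \<le> 0" unfolding Mdef by (simp add: algebra_simps)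
  moreover have "0 \<le> th powr \<alpha>" by simp
  ultimately show False using dpos by linarith
qed


lemma per_red: "\<exists>z. int_vec z \<and> (x::real^'n) - z \<in> cbox 0 (\<chi> i. 1)"
proof (intro exI conjI)
  show "int_vec (\<chi> i. of_int \<lfloor>x $ i\<rfloor> :: real^'n)" unfolding int_vec_def by simp
  show "x - (\<chi> i. of_int \<lfloor>x $ i\<rfloor>) \<in> cbox 0 (\<chi> i. 1)"
    unfolding mem_box_cart
  proof (intro allI conjI)
    fix i
    have "of_int \<lfloor>x $ i\<rfloor> \<le> x $ i" "x $ i < of_int (\<lfloor>x $ i\<rfloor> + 1)"
      using floor_correct[of "x $ i"] by simp_all
    then show "(0::real^'n) $ i \<le> (x - (\<chi> i. of_int \<lfloor>x $ i\<rfloor>)) $ i"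
      "(x - (\<chi> i. of_int \<lfloor>x $ i\<rfloor>)) $ i \<le> (\<chi> i. (1::real)) $ i"
      by (simp_all, linarith)
  qed
qed

lemma norm_cube: "y \<in> cbox 0 (\<chi> i. 1) \<Longrightarrow> norm (y::real^'n) \<le> real CARD('n)"
proof -
  assume y: "y \<in> cbox 0 (\<chi> i. 1)"
  have "norm y \<le> (\<Sum>i\<in>UNIV. \<bar>y $ i\<bar>)" by (rule norm_le_l1_cart)
  also have "\<dots> \<le> (\<Sum>i\<in>(UNIV::'n set). 1)"
    by (rule sum_mono) (use y in \<open>auto simp: mem_box_cart\<close>)
  finally show ?thesis by simp
qed

theorem lemma6p2:
  fixes H :: "'n::finite hamiltonian" and u0 :: "real^'n \<Rightarrow> real"
    and \<alpha> T :: real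
  assumes "0 < \<alpha>" "\<alpha> < 1" "T > 0"
    and H_per: "\<forall>t x r p z. int_vec z \<longrightarrow> H t (x + z) r p = H t x r p"
    and A1: "continuous_on ({0..T} \<times> UNIV \<times> UNIV \<times> UNIV) (\<lambda>(t,x,r,p). H t x r p)"
    and A2: "\<exists>\<omega>. is_modulus \<omega> \<and> (\<forall>t\<in>{0..T}. \<forall>x y r p.
               \<bar>H t x r p - H t y r p\<bar> \<le> \<omega> (norm (x - y) * (1 + norm p)))"
    and A3: "\<forall>t\<in>{0..T}. \<forall>x p. mono (\<lambda>r. H t x r p)"
    and u0_per: "\<forall>x z. int_vec z \<longrightarrow> u0 (x + z) = u0 x"
    and u0_lip: "\<exists>L. \<forall>x y. \<bar>u0 x - u0 y\<bar> \<le> L * norm (x - y)"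
  shows "\<exists>M>0. \<forall>u. visc_sol \<alpha> T H u0 u \<longrightarrow>
           (\<forall>t\<in>{0..T}. \<forall>x. \<bar>u t x - u0 x\<bar> \<le> M * t powr \<alpha>)"
proof -
  note a = assms(1,2) and T = assms(3)
  define Q where "Q = cbox (0::real^'n) (\<chi> i. 1)"
  have red: "\<And>x. \<exists>z. int_vec z \<and> x - z \<in> Q" unfolding Q_def by (rule per_red)
  obtain L0 where L0: "\<forall>x y. \<bar>u0 x - u0 y\<bar> \<le> L0 * norm (x - y)" using u0_lip by blast
  define L where "L = \<bar>L0\<bar> + 1"
  have Lpos: "L > 0" unfolding L_def by simp
  have lip: "\<forall>x y. \<bar>u0 x - u0 y\<bar> \<le> L * norm (x - y)"
  proof (intro allI)
    fix x y :: "real^'n"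
    have "L0 * norm (x - y) \<le> L * norm (x - y)" unfolding L_def
      by (rule mult_right_mono) auto
    then show "\<bar>u0 x - u0 y\<bar> \<le> L * norm (x - y)" using L0 by (meson order_trans)
  qed
  define m0 where "m0 = u0 0 - L * real CARD('n)"
  define m1 where "m1 = u0 0 + L * real CARD('n)"
  have u0b: "m0 \<le> u0 x \<and> u0 x \<le> m1" for x
  proof -
    obtain z where z: "int_vec z" "x - z \<in> Q" using red by blast
    have "u0 x = u0 (x - z)" using u0_per z(1) by (metis diff_add_cancel)
    moreover have "\<bar>u0 (x - z) - u0 0\<bar> \<le> L * real CARD('n)"
    proof -
      have "\<bar>u0 (x - z) - u0 0\<bar> \<le> L * norm (x - z)" using lip by (metis diff_zero)
      also have "\<dots> \<le> L * real CARD('n)"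
        using norm_cube[of "x - z"] z(2) Lpos unfolding Q_def by (simp add: mult_left_mono)
      finally show ?thesis .
    qed
    ultimately show ?thesis unfolding m0_def m1_def by linarith
  qed
  have m01: "m0 \<le> m1" using u0b[of 0] by linarith
  define S where "S = {0..T} \<times> Q \<times> {m0..m1} \<times> cball (0::real^'n) L"
  have "compact S" unfolding S_def Q_def
    by (intro compact_Times compact_Icc compact_cball compact_cbox)
  moreover have "continuous_on S (\<lambda>(t,x,r,p). H t x r p)"
    by (rule continuous_on_subset[OF A1]) (auto simp: S_def)
  ultimately have "bounded ((\<lambda>(t,x,r,p). H t x r p) ` S)"
    by (intro compact_imp_bounded compact_continuous_image)
  then obtain C0 where C0: "\<forall>w\<in>S. norm ((\<lambda>(t,x,r,p). H t x r p) w) \<le> C0"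
    unfolding bounded_iff by blast
  define C where "C = \<bar>C0\<bar>"
  have C: "C \<ge> 0" unfolding C_def by simp
  have Hb: "\<bar>H t x r p\<bar> \<le> C" if "t \<in> {0..T}" "m0 \<le> r" "r \<le> m1" "norm p \<le> L" for t x r p
  proof -
    obtain z where z: "int_vec z" "x - z \<in> Q" using red by blast
    have "H t x r p = H t (x - z) r p" using H_per z(1) by (metis diff_add_cancel)
    moreover have "(t, x - z, r, p) \<in> S" using that z(2) unfolding S_def by simp
    moreover have "norm ((\<lambda>(t,x,r,p). H t x r p) (t, x - z, r, p)) \<le> C0"
      using C0 \<open>(t, x - z, r, p) \<in> S\<close> by blast
    ultimately show ?thesis unfolding C_def by simp
  qed
  define M where "M = C * Gamma (1 - \<alpha>) + 1"
  have Gpos: "Gamma (1 - \<alpha>) > 0" using a by simp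
  have Mpos: "M > 0" unfolding M_def using C Gpos by (simp add: add_nonneg_pos)
  show ?thesis
  proof (intro exI conjI allI impI ballI)
    show "M > 0" by (rule Mpos)
    fix u t and x :: "real^'n" assume vs: "visc_sol \<alpha> T H u0 u" and t: "t \<in> {0..T}"
    have cont: "continuous_on ({0..T} \<times> UNIV) (\<lambda>(t,x). u t x)"
      and sub: "visc_subsol \<alpha> T H u" and sup: "visc_supersol \<alpha> T H u"
      and init: "\<forall>x. u 0 x = u0 x"
      using vs unfolding visc_sol_def by auto
    have per: "periodic_x u" using sub unfolding visc_subsol_def by blast
    have "compact ({0..T} \<times> Q)" unfolding Q_def by (intro compact_Times compact_Icc compact_cbox)
    moreover have "continuous_on ({0..T} \<times> Q) (\<lambda>(t,x). u t x)"
      by (rule continuous_on_subset[OF cont]) auto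
    ultimately have "bounded ((\<lambda>(t,x). u t x) ` ({0..T} \<times> Q))"
      by (intro compact_imp_bounded compact_continuous_image)
    then obtain B where B0: "\<forall>w\<in>{0..T} \<times> Q. norm ((\<lambda>(t,x). u t x) w) \<le> B"
      unfolding bounded_iff by blast
    have bnd: "\<forall>t\<in>{0..T}. \<forall>x. \<bar>u t x\<bar> \<le> B"
    proof (intro ballI allI)
      fix t x assume t: "t \<in> {0..T}"
      obtain z where z: "int_vec z" "x - z \<in> Q" using red by blast
      have "u t x = u t (x - z)" using per z(1) unfolding periodic_x_def by (metis diff_add_cancel)
      moreover have "norm ((\<lambda>(t,x). u t x) (t, x - z)) \<le> B"
        using B0 t z(2) by blast
      ultimately show "\<bar>u t x\<bar> \<le> B" by simp
    qed
    have upper: "\<forall>t\<in>{0..T}. \<forall>x. u t x - u0 x \<le> M * t powr \<alpha>"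
    proof (rule core[OF a T Lpos C cont bnd init lip, of m0 H M])
      show "\<forall>x. m0 \<le> u0 x" using u0b by blast
      show "\<forall>t\<in>{0..T}. \<forall>x r p. m0 \<le> r \<longrightarrow> norm p \<le> L \<longrightarrow> - C \<le> H t x r p"
      proof (intro ballI allI impI)
        fix t and x :: "real^'n" and r and p :: "real^'n" assume t: "t \<in> {0..T}" and r: "m0 \<le> r" and p: "norm p \<le> L"
        have "H t x m0 p \<le> H t x r p" using A3 t r unfolding mono_def by auto
        moreover have "\<bar>H t x m0 p\<bar> \<le> C" using Hb[OF t _ m01 p] by simp
        ultimately show "- C \<le> H t x r p" by linarith
      qed
      show "M = C * Gamma (1 - \<alpha>) + 1" by (rule M_def)
      fix x0 c0 \<eta> R th xh
      assume e: "\<eta> > 0" and R: "R > 0" and th: "th \<in> {0<..T}" and xh: "xh \<in> ball x0 R"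
        and mx: "\<forall>s\<in>{0..T}. \<forall>y\<in>cball x0 R. u s y - phif \<alpha> L M x0 c0 \<eta> s y \<le> u th xh - phif \<alpha> L M x0 c0 \<eta> th xh"
      have tf: "test_fun T (phif \<alpha> L M x0 c0 \<eta>) (phitf \<alpha> M) (Dphif L x0 \<eta>)"
        by (rule test_fun_phi[OF a T e]) (use Mpos in simp)
      have "Jop \<alpha> (th - 0) (phif \<alpha> L M x0 c0 \<eta>) th xh + Kop \<alpha> (th - 0) u th xh
              + H th xh (u th xh) (Dphif L x0 \<eta> th xh) \<le> 0"
        using sub unfolding visc_subsol_def
        apply (elim conjE)
        apply (drule spec[of _ 0], drule spec[of _ T], drule spec[of _ x0], drule spec[of _ R])
        apply (drule spec[of _ "phif \<alpha> L M x0 c0 \<eta>"], drule spec[of _ "phitf \<alpha> M"],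
               drule spec[of _ "Dphif L x0 \<eta>"], drule spec[of _ th], drule spec[of _ xh])
        apply (erule mp)
        using T th xh tf mx R by (simp add: closure_ball)
      moreover have "0 \<le> Jop \<alpha> th (phif \<alpha> L M x0 c0 \<eta>) th xh"
        by (rule Jop_phi_nonneg[OF a]) (use Mpos th in auto)
      ultimately show "(u th xh - u 0 xh) / (th powr \<alpha> * Gamma (1 - \<alpha>)) + H th xh (u th xh) (Dphif L x0 \<eta> th xh) \<le> 0"
        by (simp add: Kop_refl)
    qed
    have lower: "\<forall>t\<in>{0..T}. \<forall>x. - u t x - - u0 x \<le> M * t powr \<alpha>"
    proof (rule core[OF a T Lpos C, of "\<lambda>t x. - u t x" B "\<lambda>x. - u0 x" "- m1" "\<lambda>t x r p. - H t x (- r) (- p)" M])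
      show "continuous_on ({0..T} \<times> UNIV) (\<lambda>(t, x). - u t x)"
        using continuous_on_minus[OF cont] by (simp add: split_beta)
      show "\<forall>t\<in>{0..T}. \<forall>x. \<bar>- u t x\<bar> \<le> B" using bnd by simp
      show "\<forall>x. - u 0 x = - u0 x" using init by simp
      show "\<forall>x y. \<bar>- u0 x - - u0 y\<bar> \<le> L * norm (x - y)" using lip by (simp add: abs_minus_commute)
      show "\<forall>x. - m1 \<le> - u0 x" using u0b by simp
      show "\<forall>t\<in>{0..T}. \<forall>x r p. - m1 \<le> r \<longrightarrow> norm p \<le> L \<longrightarrow> - C \<le> - H t x (- r) (- p)"
      proof (intro ballI allI impI)
        fix t and x :: "real^'n" and r and p :: "real^'n" assume t: "t \<in> {0..T}" and r: "- m1 \<le> r" and p: "norm p \<le> L"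
        have "H t x (- r) (- p) \<le> H t x m1 (- p)" using A3 t r unfolding mono_def by auto
        moreover have "\<bar>H t x m1 (- p)\<bar> \<le> C" using Hb[OF t m01 _] p by simp
        ultimately show "- C \<le> - H t x (- r) (- p)" by linarith
      qed
      show "M = C * Gamma (1 - \<alpha>) + 1" by (rule M_def)
      fix x0 c0 \<eta> R th xh
      assume e: "\<eta> > 0" and R: "R > 0" and th: "th \<in> {0<..T}" and xh: "xh \<in> ball x0 R"
        and mx: "\<forall>s\<in>{0..T}. \<forall>y\<in>cball x0 R. - u s y - phif \<alpha> L M x0 c0 \<eta> s y \<le> - u th xh - phif \<alpha> L M x0 c0 \<eta> th xh"
      have tf: "test_fun T (\<lambda>t x. - phif \<alpha> L M x0 c0 \<eta> t x) (\<lambda>t x. - phitf \<alpha> M t x) (\<lambda>t x. - Dphif L x0 \<eta> t x)"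
        by (rule test_fun_neg, rule test_fun_phi[OF a T e]) (use Mpos in simp)
      have mx': "\<forall>s\<in>{0..T}. \<forall>y\<in>cball x0 R. u s y - - phif \<alpha> L M x0 c0 \<eta> s y \<ge> u th xh - - phif \<alpha> L M x0 c0 \<eta> th xh"
      proof (intro ballI)
        fix s y assume s: "s \<in> {0..T}" and y: "y \<in> cball x0 R"
        show "u s y - - phif \<alpha> L M x0 c0 \<eta> s y \<ge> u th xh - - phif \<alpha> L M x0 c0 \<eta> th xh"
          using mx[rule_format, OF s y] by linarith
      qed
      have "Jop \<alpha> (th - 0) (\<lambda>t x. - phif \<alpha> L M x0 c0 \<eta> t x) th xh + Kop \<alpha> (th - 0) u th xh
              + H th xh (u th xh) (- Dphif L x0 \<eta> th xh) \<ge> 0"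
        using sup unfolding visc_supersol_def
        apply (elim conjE)
        apply (drule spec[of _ 0], drule spec[of _ T], drule spec[of _ x0], drule spec[of _ R])
        apply (drule spec[of _ "\<lambda>t x. - phif \<alpha> L M x0 c0 \<eta> t x"], drule spec[of _ "\<lambda>t x. - phitf \<alpha> M t x"],
               drule spec[of _ "\<lambda>t x. - Dphif L x0 \<eta> t x"], drule spec[of _ th], drule spec[of _ xh])
        apply (erule mp)
        using T th xh tf mx' R by (simp add: closure_ball)
      moreover have "Jop \<alpha> th (\<lambda>t x. - phif \<alpha> L M x0 c0 \<eta> t x) th xh \<le> 0"
        by (rule Jop_negphi_nonpos[OF a]) (use Mpos th in auto)
      ultimately have hh: "0 \<le> (u th xh - u 0 xh) / (th powr \<alpha> * Gamma (1 - \<alpha>)) + H th xh (u th xh) (- Dphif L x0 \<eta> th xh)"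
        by (simp add: Kop_refl)
      then show "(- u th xh - - u 0 xh) / (th powr \<alpha> * Gamma (1 - \<alpha>)) + - H th xh (- (- u th xh)) (- Dphif L x0 \<eta> th xh) \<le> 0"
      proof -
        have e: "(u 0 xh - u th xh) / (th powr \<alpha> * Gamma (1 - \<alpha>)) = - ((u th xh - u 0 xh) / (th powr \<alpha> * Gamma (1 - \<alpha>)))"
          by (simp add: minus_divide_left)
        show ?thesis using e hh by simp
      qed
    qed
    show "\<bar>u t x - u0 x\<bar> \<le> M * t powr \<alpha>"
      using upper[rule_format, OF t, of x] lower[rule_format, OF t, of x] by simp
  qed
qed

end
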